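(* Assume the standing assumptions in the context and let $\theta\in\mathbb{R}^d$ with $\|\nabla f(\theta)\|>0$ and $\epsilon,\delta>0$. Then the loop of INEXACTGRADIENT$(\theta,\epsilon,\delta)$ terminates after finitely many passes, returning $z$ such that $-z$ is a descent direction for $f$ at $\theta$ (i.e. $z^T\nabla f(\theta)>0$).
   Context: Bilevel setting: $g:\mathbb{R}^n\to\mathbb{R}$, $h:\mathbb{R}^n\times\mathbb{R}^d\to\mathbb{R}$, $\hat{x}(\theta)=\arg\min_xh(x,\theta)$, $f(\theta)=g(\hat{x}(\theta))$. Standing assumptions: (A1) $h$ twice differentiable in $x$, for each $\theta$ there are $0<\mu(\theta)\le L(\theta)$ with $\mu(\theta)I\preceq\nabla_x^2h(x,\theta)\preceq L(\theta)I$ for all $x$, $\nabla_xh,\nabla^2_xh$ continuous in $\theta$; (A2) $\nabla_x^2h(x,\theta)$ is $L_H$-Lipschitz in $x$ and $\nabla^2_{x\theta}h(x,\theta)\in\mathbb{R}^{n\times d}$ (Jacobian of $\theta\mapsto\nabla_xh(x,\theta)$) is $L_J$-Lipschitz in $x$, uniformly in $\theta$; $L_{H^{-1}}$ is the Lipschitz constant in $x$ of $\nabla_x^2h(x,\theta)^{-1}$ uniformly in $\theta$. (B) $f$ continuously differentiable with $L_{\nabla f}$-Lipschitz gradient, $g$ continuously differentiable with $L_{\nabla g}$-Lipschitz gradient, $L_{\nabla f},L_{\nabla g}>0$, $g$ bounded below. INEXACTGRADIENT$(\theta,\epsilon,\delta)$ with parameters $\eta\in(0,1)$, $\underline{\nu}\in(0,1)$: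 repeat: (i) compute any $\tilde{x}$ with $\|\nabla_xh(\tilde{x},\theta)\|\le\epsilon\mu(\theta)$; (ii) compute any $q$ with $\|\nabla^2_xh(\tilde{x},\theta)q-\nabla g(\tilde{x})\|\le\delta$; (iii) $z=-\nabla^2_{x\theta}h(\tilde{x},\theta)^Tq$; (iv) $\omega=c(\tilde{x})\epsilon+\frac{\|\nabla^2_{x\theta}h(\tilde{x},\theta)\|}{\mu(\theta)}\delta+\frac{L_JL_{\nabla g}}{\mu(\theta)}\epsilon^2$, with $c(x)=\frac{L_{\nabla g}\|\nabla^2_{x\theta}h(x,\theta)\|}{\mu(\theta)}+L_{H^{-1}}\|\nabla g(x)\|\|\nabla^2_{x\theta}h(x,\theta)\|+\frac{L_J\|\nabla g(x)\|}{\mu(\theta)}$; (v) if $\omega\le(1-\eta)\|z\|$ return $(z,\epsilon,\delta)$; else $\delta\leftarrow\underline{\nu}\delta$, $\epsilon\leftarrow\underline{\nu}\epsilon$ and repeat. *)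

theory Defs
  imports "HOL-Analysis.Analysis"
begin

definition opnorm :: "real^'m^'k \<Rightarrow> real" where
  "opnorm M = onorm (\<lambda>v. M *v v)"

definition xhat :: "(real^'n \<Rightarrow> real^'d \<Rightarrow> real) \<Rightarrow> real^'d \<Rightarrow> real^'n" where
  "xhat h \<theta> = (THE x. \<forall>y. h x \<theta> \<le> h y \<theta>)"

definition cfun :: "real \<Rightarrow> real \<Rightarrow> real \<Rightarrow> (real^'n \<Rightarrow> real^'n)
     \<Rightarrow> (real^'n \<Rightarrow> real^'d \<Rightarrow> real^'d^'n) \<Rightarrow> (real^'d \<Rightarrow> real)
     \<Rightarrow> real^'n \<Rightarrow> real^'d \<Rightarrow> real" where
  "cfun Lg LHinv LJ gg J mu x \<theta> =
     Lg * opnorm (J x \<theta>) / mu \<theta> + LHinv * norm (gg x) * opnorm (J x \<theta>)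
     + LJ * norm (gg x) / mu \<theta>"

definition omega :: "real \<Rightarrow> real \<Rightarrow> real \<Rightarrow> (real^'n \<Rightarrow> real^'n)
     \<Rightarrow> (real^'n \<Rightarrow> real^'d \<Rightarrow> real^'d^'n) \<Rightarrow> (real^'d \<Rightarrow> real)
     \<Rightarrow> real^'n \<Rightarrow> real^'d \<Rightarrow> real \<Rightarrow> real \<Rightarrow> real" where
  "omega Lg LHinv LJ gg J mu x \<theta> eps del =
     cfun Lg LHinv LJ gg J mu x \<theta> * eps + opnorm (J x \<theta>) / mu \<theta> * del
     + LJ * Lg / mu \<theta> * eps ^ 2"

text \<open>Direction z = - J^T q of step (iii), J the mixed second derivative.\<close>
definition zdir :: "(real^'n \<Rightarrow> real^'d \<Rightarrow> real^'d^'n) \<Rightarrow> real^'n \<Rightarrow> real^'d \<Rightarrow> real^'n \<Rightarrow> real^'d" where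
  "zdir J x \<theta> q = - (transpose (J x \<theta>) *v q)"

end

theory Submission
  imports Defs
begin

lemma opnorm_nonneg: "0 \<le> opnorm (A::real^'m^'k)"
  unfolding opnorm_def by (rule onorm_pos_le) simp

lemma mv_bound: "norm ((A::real^'m^'k) *v v) \<le> opnorm A * norm v"
  unfolding opnorm_def by (rule onorm) simp

lemma opnorm_le_sum: "opnorm (A::real^'m^'k) \<le> (\<Sum>i\<in>UNIV. \<Sum>j\<in>UNIV. \<bar>A $ i $ j\<bar>)"
  unfolding opnorm_def by (rule onorm_le_matrix_component_sum)

lemma comp_le_norm: "\<bar>(A::real^'m^'k) $ i $ j\<bar> \<le> norm A"
proof -
  have "\<bar>A $ i $ j\<bar> \<le> norm (A $ i)" by (rule component_le_norm_cart)
  also have "norm (A $ i) \<le> norm A" by (rule Finite_Cartesian_Product.norm_nth_le)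
  finally show ?thesis .
qed

lemma opnorm_le_norm: "opnorm (A::real^'m^'k) \<le> real CARD('k) * real CARD('m) * norm A"
proof -
  have "(\<Sum>i\<in>UNIV. \<Sum>j\<in>UNIV. \<bar>A $ i $ j\<bar>) \<le> (\<Sum>i::'k\<in>UNIV. \<Sum>j::'m\<in>UNIV. norm A)"
    by (intro sum_mono comp_le_norm)
  then show ?thesis using opnorm_le_sum[of A] by simp
qed

lemma transpose_dot: "(transpose (A::real^'m^'k) *v v) \<bullet> w = v \<bullet> (A *v w)"
proof -
  have "transpose A *v v = v v* A" using vector_transpose_matrix[of v "transpose A"] by simp
  then show ?thesis by (simp add: dot_lmul_matrix)
qed

lemma mvt_bound: "norm (transpose (A::real^'m^'k) *v v) \<le> opnorm A * norm v"
proof -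
  let ?u = "transpose A *v v"
  have "(norm ?u)^2 = v \<bullet> (A *v ?u)" using transpose_dot[of A v ?u] by (simp add: power2_norm_eq_inner)
  also have "\<dots> \<le> norm v * norm (A *v ?u)" by (rule norm_cauchy_schwarz)
  also have "\<dots> \<le> norm v * (opnorm A * norm ?u)" by (simp add: mult_left_mono mv_bound)
  finally have "norm ?u * norm ?u \<le> (opnorm A * norm v) * norm ?u" by (simp add: power2_eq_square algebra_simps)
  then show ?thesis
    by (cases "norm ?u = 0") (auto simp: opnorm_nonneg)
qed

lemma opnorm_diff: "opnorm ((A::real^'m^'k) - B) \<le> opnorm (A - C) + opnorm (C - B)"
  unfolding opnorm_def
proof (rule onorm_le)
  fix x
  have "(A - B) *v x = (A - C) *v x + (C - B) *v x" by (simp add: matrix_vector_mult_diff_rdistrib)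
  then have "norm ((A - B) *v x) \<le> norm ((A - C) *v x) + norm ((C - B) *v x)" by (simp add: norm_triangle_ineq)
  also have "\<dots> \<le> onorm ((*v) (A - C)) * norm x + onorm ((*v) (C - B)) * norm x"
    using mv_bound[of "A - C" x] mv_bound[of "C - B" x] by (simp add: opnorm_def)
  finally show "norm ((A - B) *v x) \<le> (onorm ((*v) (A - C)) + onorm ((*v) (C - B))) * norm x"
    by (simp add: algebra_simps)
qed

lemma opnorm_add: "opnorm ((A::real^'m^'k) + B) \<le> opnorm A + opnorm B"
  using opnorm_diff[of A "-B" 0] by simp

lemma quad_bound: "\<bar>v \<bullet> ((A::real^'m^'m) *v v)\<bar> \<le> opnorm A * (norm v)^2"
proof -
  have "\<bar>v \<bullet> (A *v v)\<bar> \<le> norm v * norm (A *v v)" by (rule Cauchy_Schwarz_ineq2)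
  also have "\<dots> \<le> norm v * (opnorm A * norm v)" by (simp add: mult_left_mono mv_bound)
  finally show ?thesis by (simp add: power2_eq_square algebra_simps)
qed

lemma deriv_real:
  assumes "(\<phi> has_derivative L) (at \<tau>)" "\<And>s. L s = s * D"
  shows "DERIV \<phi> \<tau> :> D"
proof -
  have "L = (*) D" by (rule ext) (simp add: assms mult.commute)
  then show ?thesis using assms(1) by (simp add: has_field_derivative_def)
qed

lemma line_deriv:
  assumes "(f has_derivative f') (at (x + \<tau> *\<^sub>R d))"
  shows "((\<lambda>s. f (x + s *\<^sub>R d)) has_derivative (\<lambda>s. f' (s *\<^sub>R d))) (at \<tau>)"
proof -
  have "((\<lambda>s. x + s *\<^sub>R d) has_derivative (\<lambda>s. s *\<^sub>R d)) (at \<tau>)"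
    by (auto intro!: derivative_eq_intros)
  from has_derivative_compose[OF this assms] show ?thesis .
qed

locale ll =
  fixes h :: "real^'n \<Rightarrow> real^'d \<Rightarrow> real"
    and gx :: "real^'n \<Rightarrow> real^'d \<Rightarrow> real^'n"
    and Hx :: "real^'n \<Rightarrow> real^'d \<Rightarrow> real^'n^'n"
    and mu :: "real^'d \<Rightarrow> real"
    and LH :: real
  assumes h_grad: "\<And>x t. ((\<lambda>y. h y t) has_derivative (\<lambda>v. gx x t \<bullet> v)) (at x)"
    and h_hess: "\<And>x t. ((\<lambda>y. gx y t) has_derivative (\<lambda>v. Hx x t *v v)) (at x)"
    and mu_pos: "\<And>t. 0 < mu t"
    and hess_lower: "\<And>x t v. mu t * (norm v)\<^sup>2 \<le> v \<bullet> (Hx x t *v v)"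
    and H_lip: "\<And>x y t. opnorm (Hx x t - Hx y t) \<le> LH * norm (x - y)"
begin

lemma psd: "0 \<le> v \<bullet> (Hx x t *v v)"
  using hess_lower[of t v x] mu_pos[of t] by (smt (verit) mult_nonneg_nonneg zero_le_power2)

lemma mono_seg:
  assumes S: "convex S" and Hm: "\<And>y v. y \<in> S \<Longrightarrow> m * (norm v)\<^sup>2 \<le> v \<bullet> (Hx y t *v v)"
    and x: "x \<in> S" and y: "y \<in> S"
  shows "m * (norm (y - x))\<^sup>2 \<le> (gx y t - gx x t) \<bullet> (y - x)"
proof (cases "x = y")
  case True then show ?thesis by simp
next
  case False
  define d where "d = y - x"
  define \<psi> where "\<psi> = (\<lambda>s. gx (x + s *\<^sub>R d) t \<bullet> d)"
  have D: "DERIV \<psi> s :> d \<bullet> (Hx (x + s *\<^sub>R d) t *v d)" for s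
  proof -
    have "((\<lambda>s. gx (x + s *\<^sub>R d) t) has_derivative (\<lambda>r. Hx (x + s *\<^sub>R d) t *v (r *\<^sub>R d))) (at s)"
      by (rule line_deriv[OF h_hess])
    then have "(\<psi> has_derivative (\<lambda>r. (Hx (x + s *\<^sub>R d) t *v (r *\<^sub>R d)) \<bullet> d)) (at s)"
      unfolding \<psi>_def by (rule has_derivative_inner_left)
    then show ?thesis
      by (rule deriv_real) (simp add: matrix_vector_mult_scaleR inner_commute)
  qed
  obtain z where z: "0 < z" "z < 1" "\<psi> 1 - \<psi> 0 = (1 - 0) * (d \<bullet> (Hx (x + z *\<^sub>R d) t *v d))"
    using MVT2[of 0 1 \<psi> "\<lambda>s. d \<bullet> (Hx (x + s *\<^sub>R d) t *v d)"] D by auto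
  have "x + z *\<^sub>R d \<in> S"
  proof -
    have "x + z *\<^sub>R d = (1 - z) *\<^sub>R x + z *\<^sub>R y" by (simp add: d_def algebra_simps)
    then show ?thesis using S x y z by (simp add: convex_def)
  qed
  then have "m * (norm d)\<^sup>2 \<le> d \<bullet> (Hx (x + z *\<^sub>R d) t *v d)" by (rule Hm)
  also have "\<dots> = \<psi> 1 - \<psi> 0" using z by simp
  also have "\<dots> = (gx y t - gx x t) \<bullet> (y - x)" by (simp add: \<psi>_def d_def inner_diff_left)
  finally show ?thesis by (simp add: d_def)
qed

lemma mono0: "0 \<le> (gx y t - gx x t) \<bullet> (y - x)"
  using mono_seg[of UNIV 0 t x y] psd by simp

lemma strong_mono: "mu t * (norm (y - x))\<^sup>2 \<le> (gx y t - gx x t) \<bullet> (y - x)"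
  using mono_seg[of UNIV "mu t" t x y] hess_lower by simp

lemma convex_ineq: "h x t + gx x t \<bullet> (y - x) \<le> h y t"
proof (cases "x = y")
  case True then show ?thesis by simp
next
  case False
  define d where "d = y - x"
  define \<phi> where "\<phi> = (\<lambda>s. h (x + s *\<^sub>R d) t)"
  have D: "DERIV \<phi> s :> gx (x + s *\<^sub>R d) t \<bullet> d" for s
  proof -
    have "(\<phi> has_derivative (\<lambda>r. gx (x + s *\<^sub>R d) t \<bullet> (r *\<^sub>R d))) (at s)"
      unfolding \<phi>_def by (rule line_deriv[OF h_grad])
    then show ?thesis by (rule deriv_real) simp
  qed
  obtain z where z: "0 < z" "z < 1" "\<phi> 1 - \<phi> 0 = (1 - 0) * (gx (x + z *\<^sub>R d) t \<bullet> d)"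
    using MVT2[of 0 1 \<phi> "\<lambda>s. gx (x + s *\<^sub>R d) t \<bullet> d"] D by auto
  have "0 \<le> (gx (x + z *\<^sub>R d) t - gx x t) \<bullet> ((x + z *\<^sub>R d) - x)" by (rule mono0)
  then have "0 \<le> z * ((gx (x + z *\<^sub>R d) t - gx x t) \<bullet> d)" by simp
  then have "0 \<le> (gx (x + z *\<^sub>R d) t - gx x t) \<bullet> d" using z by (simp add: zero_le_mult_iff)
  then have "gx x t \<bullet> d \<le> \<phi> 1 - \<phi> 0" using z by (simp add: inner_diff_left)
  then show ?thesis by (simp add: \<phi>_def d_def)
qed

end

context ll begin

lemma zero_unique: "gx x t = 0 \<Longrightarrow> gx y t = 0 \<Longrightarrow> x = y"
proof -
  assume a: "gx x t = 0" "gx y t = 0"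
  have "mu t * (norm (y - x))\<^sup>2 \<le> 0" using strong_mono[of t y x] a by simp
  moreover have "0 < mu t" by (rule mu_pos)
  ultimately have "(norm (y - x))\<^sup>2 \<le> 0" by (simp add: mult_le_0_iff)
  then show "x = y" by simp
qed

lemma coercive: "h 0 t + gx 0 t \<bullet> y + mu t / 4 * (norm y)\<^sup>2 \<le> h y t"
proof -
  let ?y2 = "(1/2) *\<^sub>R y"
  have a: "h ?y2 t + gx ?y2 t \<bullet> (y - ?y2) \<le> h y t" by (rule convex_ineq)
  have b: "h 0 t + gx 0 t \<bullet> (?y2 - 0) \<le> h ?y2 t" by (rule convex_ineq)
  have c: "mu t * (norm (?y2 - 0))\<^sup>2 \<le> (gx ?y2 t - gx 0 t) \<bullet> (?y2 - 0)" by (rule strong_mono)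
  have e1: "y - ?y2 = ?y2" by (simp add: vec_eq_iff)
  have e2: "(norm ?y2)\<^sup>2 = (norm y)\<^sup>2 / 4" by (simp add: power2_eq_square)
  have e3: "gx 0 t \<bullet> ?y2 = (gx 0 t \<bullet> y)/2" by simp
  have e4: "(norm (?y2 - 0))\<^sup>2 = (norm y)\<^sup>2 / 4" using e2 by simp
  have e5: "gx ?y2 t \<bullet> ?y2 = (gx ?y2 t \<bullet> y) / 2" by simp
  have e6: "(gx ?y2 t - gx 0 t) \<bullet> (?y2 - 0) = (gx ?y2 t \<bullet> y)/2 - (gx 0 t \<bullet> y)/2"
    by (simp add: inner_diff_left)
  have c': "mu t * ((norm y)\<^sup>2 / 4) \<le> (gx ?y2 t \<bullet> y)/2 - (gx 0 t \<bullet> y)/2"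
    using c unfolding e4 e6 .
  have e7: "mu t / 4 * (norm y)\<^sup>2 = mu t * ((norm y)\<^sup>2 / 4)" by simp
  from a b c' show ?thesis unfolding e1 e7 using e3 e5 by simp
qed

lemma min_exists: "\<exists>x. \<forall>y. h x t \<le> h y t"
proof -
  define R where "R = 4 * norm (gx 0 t) / mu t + 1"
  have cont: "continuous_on (cball 0 R) (\<lambda>y. h y t)"
    by (rule has_derivative_continuous_on) (rule has_derivative_at_withinI[OF h_grad])
  have "0 \<le> R" unfolding R_def using mu_pos[of t] by simp
  then obtain x where x: "x \<in> cball 0 R" "\<forall>y\<in>cball 0 R. h x t \<le> h y t"
    using continuous_attains_inf[OF compact_cball _ cont] by fastforce
  have "h x t \<le> h y t" for y
  proof (cases "y \<in> cball 0 R")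
    case True then show ?thesis using x by auto
  next
    case False
    then have ny: "norm y > R" by simp
    have m: "0 < mu t" by (rule mu_pos)
    have "4 * norm (gx 0 t) < mu t * norm y"
      using ny m unfolding R_def by (simp add: field_simps)
    moreover have "0 < norm y" using ny \<open>0 \<le> R\<close> by linarith
    ultimately have "norm y * (4 * norm (gx 0 t)) < norm y * (mu t * norm y)"
      by (rule mult_strict_left_mono)
    then have "norm (gx 0 t) * norm y < mu t / 4 * (norm y)\<^sup>2"
      by (simp add: power2_eq_square field_simps)
    moreover have "- (norm (gx 0 t) * norm y) \<le> gx 0 t \<bullet> y"
      using Cauchy_Schwarz_ineq2[of "gx 0 t" y] by linarith
    ultimately have "h 0 t < h y t" using coercive[of t y] by linarith
    moreover have "h x t \<le> h 0 t" using x \<open>0 \<le> R\<close> by auto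
    ultimately show ?thesis by simp
  qed
  then show ?thesis by blast
qed

lemma min_zero: assumes "\<forall>y. h x t \<le> h y t" shows "gx x t = 0"
proof -
  have "(\<lambda>v. gx x t \<bullet> v) = (\<lambda>v. 0)"
    by (rule has_derivative_local_min[OF h_grad]) (simp add: assms)
  then have "gx x t \<bullet> gx x t = 0" by metis
  then show ?thesis by simp
qed

lemma xhat_zero: "gx (xhat h t) t = 0"
proof -
  obtain x where x: "\<forall>y. h x t \<le> h y t" using min_exists by blast
  have "\<exists>!x. \<forall>y. h x t \<le> h y t"
  proof (rule ex1I[of _ x])
    show "\<forall>y. h x t \<le> h y t" by (rule x)
  next
    fix x' assume "\<forall>y. h x' t \<le> h y t"
    then show "x' = x" using zero_unique[OF min_zero[OF x] min_zero] by simp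
  qed
  then have "\<forall>y. h (xhat h t) t \<le> h y t" unfolding xhat_def by (rule theI')
  then show ?thesis by (rule min_zero)
qed

lemma xhat_unique: "gx x t = 0 \<Longrightarrow> x = xhat h t"
  using zero_unique xhat_zero by blast

end

lemma onorm_inner: "onorm (\<lambda>v::real^'n. w \<bullet> v) \<le> norm w"
  by (rule onorm_le) (simp add: Cauchy_Schwarz_ineq2)

lemma zero_if_le_all: assumes "\<And>s::real. s > 0 \<Longrightarrow> \<bar>D\<bar> \<le> C * s" shows "D = (0::real)"
proof (rule ccontr)
  assume "D \<noteq> 0"
  then have D: "\<bar>D\<bar> > 0" by simp
  define s where "s = \<bar>D\<bar> / (2 * (\<bar>C\<bar> + 1))"
  have s: "s > 0" using D by (simp add: s_def)
  have "\<bar>D\<bar> \<le> C * s" by (rule assms[OF s])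
  also have "\<dots> \<le> \<bar>C\<bar> * s" using s by (simp add: mult_right_mono)
  also have "\<dots> < (2 * (\<bar>C\<bar> + 1)) * s" by (rule mult_strict_right_mono) (use s in auto)
  also have "\<dots> = \<bar>D\<bar>" unfolding s_def by simp
  finally show False by simp
qed

context ll begin

lemma LH_nonneg: "0 \<le> LH"
proof -
  obtain v :: "real^'n" where v: "v \<noteq> 0" using zero_neq_one by blast
  have "0 \<le> LH * norm (v - 0)" using H_lip[where x=v and y=0 and t=undefined] opnorm_nonneg[of "Hx v undefined - Hx 0 undefined"] by linarith
  then show ?thesis using v by (simp add: zero_le_mult_iff)
qed

lemma lin_bound: "norm (gx (p + c) t - gx p t - Hx p t *v c) \<le> LH * (norm c)\<^sup>2"
proof -
  have "norm (gx (p + c) t - gx p t - Hx p t *v ((p + c) - p)) \<le> norm ((p + c) - p) * (LH * norm c)"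
  proof (rule differentiable_bound_linearization[where S="cball p (norm c)" and f="\<lambda>y. gx y t"
          and f'="\<lambda>y v. Hx y t *v v"])
    fix \<tau> :: real assume "\<tau> \<in> {0..1}"
    then show "p + \<tau> *\<^sub>R ((p + c) - p) \<in> cball p (norm c)"
      by (simp add: dist_norm mult_left_le_one_le)
  next
    fix y assume "y \<in> cball p (norm c)"
    show "((\<lambda>y. gx y t) has_derivative (\<lambda>v. Hx y t *v v)) (at y within cball p (norm c))"
      by (rule has_derivative_at_withinI[OF h_hess])
  next
    fix y assume y: "y \<in> cball p (norm c)"
    have "(\<lambda>v. Hx y t *v v) - (\<lambda>v. Hx p t *v v) = (\<lambda>v. (Hx y t - Hx p t) *v v)"
      by (rule ext) (simp add: matrix_vector_mult_diff_rdistrib)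
    then have "onorm ((\<lambda>v. Hx y t *v v) - (\<lambda>v. Hx p t *v v)) = opnorm (Hx y t - Hx p t)"
      by (simp add: opnorm_def)
    also have "\<dots> \<le> LH * norm (y - p)" by (rule H_lip)
    also have "\<dots> \<le> LH * norm c" using y LH_nonneg by (simp add: dist_norm norm_minus_commute mult_left_mono)
    finally show "onorm ((\<lambda>v. Hx y t *v v) - (\<lambda>v. Hx p t *v v)) \<le> LH * norm c" .
  qed simp
  then show ?thesis by (simp add: power2_eq_square mult.commute mult.left_commute)
qed

lemma sym_step:
  "\<bar>h (x + A + c) t - h (x + A) t - h (x + c) t + h x t - A \<bullet> (Hx x t *v c)\<bar>
     \<le> LH * ((norm c)\<^sup>2 + norm A * norm c) * norm A"
proof -
  define F where "F = (\<lambda>u. h (x + u + c) t - h (x + u) t - (Hx x t *v c) \<bullet> u)"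
  define S where "S = cball (0::real^'n) (norm A)"
  have "norm (F A - F 0) \<le> LH * ((norm c)\<^sup>2 + norm A * norm c) * norm (A - 0)"
  proof (rule differentiable_bound[where S=S and f'="\<lambda>u v. (gx (x + u + c) t - gx (x + u) t - Hx x t *v c) \<bullet> v"])
    show "convex S" by (simp add: S_def)
    show "A \<in> S" "0 \<in> S" by (auto simp: S_def)
  next
    fix u assume "u \<in> S"
    have d1: "((\<lambda>u. h (x + u + c) t) has_derivative (\<lambda>v. gx (x + u + c) t \<bullet> v)) (at u)"
    proof -
      have "((\<lambda>u. x + u + c) has_derivative (\<lambda>v. v)) (at u)" by (auto intro!: derivative_eq_intros)
      from has_derivative_compose[OF this h_grad[where x="x + u + c" and t=t]] show ?thesis by simp
    qed
    have d2: "((\<lambda>u. h (x + u) t) has_derivative (\<lambda>v. gx (x + u) t \<bullet> v)) (at u)"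
    proof -
      have "((\<lambda>u. x + u) has_derivative (\<lambda>v. v)) (at u)" by (auto intro!: derivative_eq_intros)
      from has_derivative_compose[OF this h_grad[where x="x + u" and t=t]] show ?thesis by simp
    qed
    have "(F has_derivative (\<lambda>v. gx (x + u + c) t \<bullet> v - gx (x + u) t \<bullet> v - (Hx x t *v c) \<bullet> v)) (at u)"
      unfolding F_def by (intro has_derivative_diff d1 d2 has_derivative_inner_right has_derivative_ident)
    then show "(F has_derivative (\<lambda>v. (gx (x + u + c) t - gx (x + u) t - Hx x t *v c) \<bullet> v)) (at u within S)"
      by (simp add: inner_diff_left has_derivative_at_withinI)
  next
    fix u assume u: "u \<in> S"
    have "norm (gx (x + u + c) t - gx (x + u) t - Hx x t *v c)
        \<le> norm (gx (x + u + c) t - gx (x + u) t - Hx (x + u) t *v c) + norm ((Hx (x + u) t - Hx x t) *v c)"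
      by (rule order_trans[OF _ norm_triangle_ineq]) (simp add: matrix_vector_mult_diff_rdistrib algebra_simps)
    also have "\<dots> \<le> LH * (norm c)\<^sup>2 + LH * norm A * norm c"
    proof (rule add_mono)
      show "norm (gx (x + u + c) t - gx (x + u) t - Hx (x + u) t *v c) \<le> LH * (norm c)\<^sup>2"
        using lin_bound[of "x + u" c t] by (simp add: add.assoc)
      have "norm ((Hx (x + u) t - Hx x t) *v c) \<le> opnorm (Hx (x + u) t - Hx x t) * norm c" by (rule mv_bound)
      also have "\<dots> \<le> (LH * norm u) * norm c"
        using H_lip[where x="x + u" and y=x and t=t] by (simp add: mult_right_mono)
      also have "\<dots> \<le> LH * norm A * norm c" using u LH_nonneg by (simp add: S_def mult_left_mono mult_right_mono)
      finally show "norm ((Hx (x + u) t - Hx x t) *v c) \<le> LH * norm A * norm c" .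
    qed
    finally have "norm (gx (x + u + c) t - gx (x + u) t - Hx x t *v c) \<le> LH * ((norm c)\<^sup>2 + norm A * norm c)"
      by (simp add: algebra_simps)
    then show "onorm (\<lambda>v. (gx (x + u + c) t - gx (x + u) t - Hx x t *v c) \<bullet> v) \<le> LH * ((norm c)\<^sup>2 + norm A * norm c)"
      using onorm_inner order_trans by blast
  qed
  moreover have "F A - F 0 = h (x + A + c) t - h (x + A) t - h (x + c) t + h x t - A \<bullet> (Hx x t *v c)"
    by (simp add: F_def inner_commute)
  ultimately show ?thesis by simp
qed

lemma hess_sym: "a \<bullet> (Hx x t *v b) = b \<bullet> (Hx x t *v a)"
proof -
  have "\<bar>a \<bullet> (Hx x t *v b) - b \<bullet> (Hx x t *v a)\<bar>
     \<le> (LH * ((norm b)\<^sup>2 + norm a * norm b) * norm a + LH * ((norm a)\<^sup>2 + norm b * norm a) * norm b) * s"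
    if s: "s > 0" for s
  proof -
    let ?D = "h (x + s *\<^sub>R a + s *\<^sub>R b) t - h (x + s *\<^sub>R a) t - h (x + s *\<^sub>R b) t + h x t"
    have 1: "\<bar>?D - (s *\<^sub>R a) \<bullet> (Hx x t *v (s *\<^sub>R b))\<bar> \<le> LH * ((norm (s *\<^sub>R b))\<^sup>2 + norm (s *\<^sub>R a) * norm (s *\<^sub>R b)) * norm (s *\<^sub>R a)"
      using sym_step[of x "s *\<^sub>R a" "s *\<^sub>R b" t] by simp
    have 2: "\<bar>?D - (s *\<^sub>R b) \<bullet> (Hx x t *v (s *\<^sub>R a))\<bar> \<le> LH * ((norm (s *\<^sub>R a))\<^sup>2 + norm (s *\<^sub>R b) * norm (s *\<^sub>R a)) * norm (s *\<^sub>R b)"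
      using sym_step[of x "s *\<^sub>R b" "s *\<^sub>R a" t] by (simp add: algebra_simps)
    have "s^2 * \<bar>a \<bullet> (Hx x t *v b) - b \<bullet> (Hx x t *v a)\<bar>
        = \<bar>(?D - (s *\<^sub>R b) \<bullet> (Hx x t *v (s *\<^sub>R a))) - (?D - (s *\<^sub>R a) \<bullet> (Hx x t *v (s *\<^sub>R b)))\<bar>"
    proof -
      have "(?D - (s *\<^sub>R b) \<bullet> (Hx x t *v (s *\<^sub>R a))) - (?D - (s *\<^sub>R a) \<bullet> (Hx x t *v (s *\<^sub>R b)))
          = s^2 * (a \<bullet> (Hx x t *v b) - b \<bullet> (Hx x t *v a))"
        by (simp add: matrix_vector_mult_scaleR power2_eq_square algebra_simps)
      then show ?thesis by (simp add: abs_mult)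
    qed
    also have "\<dots> \<le> s^2 * ((LH * ((norm b)\<^sup>2 + norm a * norm b) * norm a + LH * ((norm a)\<^sup>2 + norm b * norm a) * norm b) * s)"
      using 1 2 s by (simp add: power2_eq_square algebra_simps)
    finally show ?thesis using s by simp
  qed
  then show ?thesis using zero_if_le_all by (metis eq_iff_diff_eq_0)
qed

end

context ll begin

lemma H_inj: "Hx x t *v v = 0 \<Longrightarrow> v = 0"
proof -
  assume a: "Hx x t *v v = 0"
  have "mu t * (norm v)\<^sup>2 \<le> 0" using hess_lower[where x=x and t=t and v=v] a by simp
  then have "(norm v)\<^sup>2 \<le> 0" using mu_pos[of t] by (simp add: mult_le_0_iff)
  then show "v = 0" by simp
qed

lemma H_inv: "Hx x t ** matrix_inv (Hx x t) = mat 1 \<and> matrix_inv (Hx x t) ** Hx x t = mat 1"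
proof -
  have "\<exists>B. B ** Hx x t = mat 1" using H_inj matrix_left_invertible_ker by blast
  then have "invertible (Hx x t)" using invertible_left_inverse by blast
  then show ?thesis unfolding invertible_def matrix_inv_def by (rule someI_ex)
qed

lemma Hinv_l: "Hx x t *v (matrix_inv (Hx x t) *v v) = v"
  using H_inv by (simp add: matrix_vector_mul_assoc)

lemma Hinv_r: "matrix_inv (Hx x t) *v (Hx x t *v v) = v"
  using H_inv by (simp add: matrix_vector_mul_assoc)

lemma Hinv_bound: "norm (matrix_inv (Hx x t) *v v) \<le> norm v / mu t"
proof -
  let ?w = "matrix_inv (Hx x t) *v v"
  have m: "0 < mu t" by (rule mu_pos)
  have "mu t * (norm ?w)\<^sup>2 \<le> ?w \<bullet> (Hx x t *v ?w)" by (rule hess_lower)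
  also have "\<dots> = ?w \<bullet> v" by (simp add: Hinv_l)
  also have "\<dots> \<le> norm ?w * norm v" by (rule norm_cauchy_schwarz)
  finally have "(mu t * norm ?w) * norm ?w \<le> norm v * norm ?w" by (simp add: power2_eq_square algebra_simps)
  then have "mu t * norm ?w \<le> norm v"
    by (cases "norm ?w = 0") (auto simp: m)
  then show ?thesis using m by (simp add: field_simps)
qed

lemma Hinv_sym: "u \<bullet> (matrix_inv (Hx x t) *v v) = (matrix_inv (Hx x t) *v u) \<bullet> v"
proof -
  let ?a = "matrix_inv (Hx x t) *v u" and ?b = "matrix_inv (Hx x t) *v v"
  have "u \<bullet> ?b = (Hx x t *v ?a) \<bullet> ?b" by (simp add: Hinv_l)
  also have "\<dots> = ?b \<bullet> (Hx x t *v ?a)" by (simp add: inner_commute)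
  also have "\<dots> = ?a \<bullet> (Hx x t *v ?b)" by (rule hess_sym)
  also have "\<dots> = ?a \<bullet> v" by (simp add: Hinv_l)
  finally show ?thesis .
qed

end

locale ll2 = ll h gx Hx mu LH
  for h :: "real^'n \<Rightarrow> real^'d \<Rightarrow> real"
    and gx :: "real^'n \<Rightarrow> real^'d \<Rightarrow> real^'n"
    and Hx :: "real^'n \<Rightarrow> real^'d \<Rightarrow> real^'n^'n"
    and mu :: "real^'d \<Rightarrow> real"
    and LH :: real +
  fixes Jx :: "real^'n \<Rightarrow> real^'d \<Rightarrow> real^'d^'n"
  assumes Hx_cont: "\<And>x. continuous_on UNIV (\<lambda>t. Hx x t)"
    and J_deriv: "\<And>x t. ((\<lambda>s. gx x s) has_derivative (\<lambda>w. Jx x t *v w)) (at t)"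
begin

lemma local_lower:
  assumes as: "opnorm (Hx x0 s - Hx x0 \<theta>) \<le> mu \<theta> / 4"
    and y: "norm (y - x0) \<le> mu \<theta> / (4 * (LH + 1))"
  shows "mu \<theta> / 2 * (norm v)\<^sup>2 \<le> v \<bullet> (Hx y s *v v)"
proof -
  have m: "0 < mu \<theta>" by (rule mu_pos)
  have L: "0 \<le> LH" by (rule LH_nonneg)
  have "LH * norm (y - x0) \<le> LH * (mu \<theta> / (4 * (LH + 1)))" using y L by (rule mult_left_mono)
  also have "\<dots> \<le> mu \<theta> / 4" using m L by (simp add: field_simps)
  finally have "opnorm (Hx y s - Hx x0 s) \<le> mu \<theta> / 4" using H_lip[where x=y and y=x0 and t=s] by linarith
  then have o: "opnorm (Hx y s - Hx x0 \<theta>) \<le> mu \<theta> / 2" using opnorm_diff[of "Hx y s" "Hx x0 \<theta>" "Hx x0 s"] as by linarith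
  have "v \<bullet> (Hx y s *v v) = v \<bullet> (Hx x0 \<theta> *v v) + v \<bullet> ((Hx y s - Hx x0 \<theta>) *v v)"
    by (simp add: matrix_vector_mult_diff_rdistrib inner_diff_right)
  moreover have "mu \<theta> * (norm v)\<^sup>2 \<le> v \<bullet> (Hx x0 \<theta> *v v)" by (rule hess_lower)
  moreover have "- (opnorm (Hx y s - Hx x0 \<theta>) * (norm v)\<^sup>2) \<le> v \<bullet> ((Hx y s - Hx x0 \<theta>) *v v)"
    using quad_bound[of v "Hx y s - Hx x0 \<theta>"] by linarith
  moreover have "opnorm (Hx y s - Hx x0 \<theta>) * (norm v)\<^sup>2 \<le> mu \<theta> / 2 * (norm v)\<^sup>2"
    using o by (rule mult_right_mono) simp
  ultimately show ?thesis by linarith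
qed

lemma local_bound:
  assumes x0: "gx x0 \<theta> = 0"
    and as: "opnorm (Hx x0 s - Hx x0 \<theta>) \<le> mu \<theta> / 4"
    and gs: "norm (gx x0 s) < mu \<theta> / 2 * (mu \<theta> / (4 * (LH + 1)))"
  shows "norm (xhat h s - x0) \<le> 2 * norm (gx x0 s) / mu \<theta>"
proof -
  define r where "r = mu \<theta> / (4 * (LH + 1))"
  define d where "d = xhat h s - x0"
  have m: "0 < mu \<theta>" by (rule mu_pos)
  have r: "0 < r" unfolding r_def using m LH_nonneg by simp
  have z: "gx (xhat h s) s = 0" by (rule xhat_zero)
  have loc: "mu \<theta> / 2 * (norm (q - p))\<^sup>2 \<le> (gx q s - gx p s) \<bullet> (q - p)"
    if "p \<in> cball x0 r" "q \<in> cball x0 r" for p q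
  proof (rule mono_seg[where S="cball x0 r"])
    fix y v assume "y \<in> cball x0 r"
    then show "mu \<theta> / 2 * (norm v)\<^sup>2 \<le> v \<bullet> (Hx y s *v v)"
      by (intro local_lower[OF as]) (simp add: r_def dist_norm norm_minus_commute)
  qed (use that in auto)
  show ?thesis
  proof (cases "norm d \<le> r")
    case True
    have "mu \<theta> / 2 * (norm d)\<^sup>2 \<le> (gx (xhat h s) s - gx x0 s) \<bullet> d"
      using loc[of x0 "xhat h s"] True r by (simp add: d_def dist_norm norm_minus_commute)
    also have "\<dots> = - (gx x0 s \<bullet> d)" using z by simp
    also have "\<dots> \<le> norm (gx x0 s) * norm d" using Cauchy_Schwarz_ineq2[of "gx x0 s" d] by linarith
    finally have "(mu \<theta> / 2 * norm d) * norm d \<le> norm (gx x0 s) * norm d" by (simp add: power2_eq_square algebra_simps)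
    then have "mu \<theta> / 2 * norm d \<le> norm (gx x0 s)"
      by (cases "norm d = 0") (auto simp: m)
    then show ?thesis using m unfolding d_def by (simp add: field_simps)
  next
    case False
    then have nd: "norm d > r" by simp
    then have nd0: "norm d > 0" using r by linarith
    define p where "p = x0 + (r / norm d) *\<^sub>R d"
    have pr: "norm (p - x0) = r" unfolding p_def using nd0 r by simp
    have "mu \<theta> / 2 * (norm (p - x0))\<^sup>2 \<le> (gx p s - gx x0 s) \<bullet> (p - x0)"
      using loc[of x0 p] pr r by (simp add: dist_norm norm_minus_commute)
    then have A: "mu \<theta> / 2 * r^2 \<le> gx p s \<bullet> (p - x0) - gx x0 s \<bullet> (p - x0)"
      using pr by (simp add: inner_diff_left)
    have "0 \<le> (gx (xhat h s) s - gx p s) \<bullet> (xhat h s - p)" by (rule mono0)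
    also have "xhat h s - p = (1 - r / norm d) *\<^sub>R d" by (simp add: p_def d_def algebra_simps)
    finally have "0 \<le> (1 - r / norm d) * (- (gx p s \<bullet> d))" using z by simp
    moreover have "0 < 1 - r / norm d" using nd nd0 by (simp add: field_simps)
    ultimately have "gx p s \<bullet> d \<le> 0"
      using mult_le_cancel_left_pos[of "1 - r / norm d" "gx p s \<bullet> d" 0] by simp
    moreover have "0 \<le> r / norm d" using r nd0 by simp
    ultimately have "(r / norm d) * (gx p s \<bullet> d) \<le> 0"
      by (metis mult_nonneg_nonpos)
    then have B: "gx p s \<bullet> (p - x0) \<le> 0" by (simp add: p_def)
    have "- (gx x0 s \<bullet> (p - x0)) \<le> norm (gx x0 s) * r"
      using Cauchy_Schwarz_ineq2[of "gx x0 s" "p - x0"] unfolding pr by linarith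
    also have "\<dots> < mu \<theta> / 2 * r * r" using gs r unfolding r_def[symmetric] by (rule mult_strict_right_mono)
    finally have "mu \<theta> / 2 * r^2 > - (gx x0 s \<bullet> (p - x0))" by (simp add: power2_eq_square algebra_simps)
    with A B show ?thesis by linarith
  qed
qed

end

context ll2 begin

lemma K2:
  fixes \<theta> s :: "real^'d"
  defines "x0 \<equiv> xhat h \<theta>"
  defines "d \<equiv> xhat h s - x0"
  shows "norm (d + matrix_inv (Hx x0 \<theta>) *v (Jx x0 \<theta> *v (s - \<theta>)))
     \<le> (LH * (norm d)\<^sup>2 + opnorm (Hx x0 s - Hx x0 \<theta>) * norm d + norm (gx x0 s - Jx x0 \<theta> *v (s - \<theta>))) / mu \<theta>"
proof -
  let ?H0 = "Hx x0 \<theta>" and ?J0 = "Jx x0 \<theta>" and ?Hi = "matrix_inv (Hx x0 \<theta>)"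
  have z: "gx (x0 + d) s = 0" unfolding d_def using xhat_zero by simp
  define w where "w = ?H0 *v d + ?J0 *v (s - \<theta>)"
  have weq: "w = - (gx (x0 + d) s - gx x0 s - Hx x0 s *v d) - ((Hx x0 s - ?H0) *v d) - (gx x0 s - ?J0 *v (s - \<theta>))"
    unfolding w_def z by (simp add: matrix_vector_mult_diff_rdistrib algebra_simps)
  have "norm w \<le> norm (gx (x0 + d) s - gx x0 s - Hx x0 s *v d) + norm ((Hx x0 s - ?H0) *v d) + norm (gx x0 s - ?J0 *v (s - \<theta>))"
    unfolding weq by (metis (no_types, lifting) diff_conv_add_uminus norm_minus_cancel norm_triangle_le norm_triangle_ineq add_mono order_refl)
  also have "\<dots> \<le> LH * (norm d)\<^sup>2 + opnorm (Hx x0 s - ?H0) * norm d + norm (gx x0 s - ?J0 *v (s - \<theta>))"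
    using lin_bound[of x0 d s] mv_bound[of "Hx x0 s - ?H0" d] by linarith
  finally have nw: "norm w \<le> \<dots>" .
  have "d + ?Hi *v (?J0 *v (s - \<theta>)) = ?Hi *v w"
    unfolding w_def by (simp add: matrix_vector_right_distrib Hinv_r)
  then have "norm (d + ?Hi *v (?J0 *v (s - \<theta>))) \<le> norm w / mu \<theta>" using Hinv_bound by simp
  also have "\<dots> \<le> (LH * (norm d)\<^sup>2 + opnorm (Hx x0 s - ?H0) * norm d + norm (gx x0 s - ?J0 *v (s - \<theta>))) / mu \<theta>"
    using nw mu_pos[of \<theta>] by (simp add: divide_right_mono)
  finally show ?thesis .
qed

lemma xhat_deriv:
  "((\<lambda>s. xhat h s) has_derivative (\<lambda>w. - (matrix_inv (Hx (xhat h \<theta>) \<theta>) *v (Jx (xhat h \<theta>) \<theta> *v w)))) (at \<theta>)"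
proof -
  define x0 where "x0 = xhat h \<theta>"
  define H0 where "H0 = Hx x0 \<theta>"
  define J0 where "J0 = Jx x0 \<theta>"
  define Hi where "Hi = matrix_inv H0"
  define m0 where "m0 = mu \<theta>"
  define r where "r = m0 / (4 * (LH + 1))"
  define oJ where "oJ = opnorm J0"
  define C where "C = 2 * (oJ + 1) / m0"
  have m0: "0 < m0" unfolding m0_def by (rule mu_pos)
  have L: "0 \<le> LH" by (rule LH_nonneg)
  have r: "0 < r" unfolding r_def using m0 L by simp
  have oJ: "0 \<le> oJ" unfolding oJ_def by (rule opnorm_nonneg)
  have C: "0 < C" unfolding C_def using m0 oJ by simp
  have x0z: "gx x0 \<theta> = 0" unfolding x0_def by (rule xhat_zero)
  have bl: "bounded_linear (\<lambda>w. - (Hi *v (J0 *v w)))"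
    by (intro bounded_linear_minus bounded_linear_compose[OF matrix_vector_mul_bounded_linear] matrix_vector_mul_bounded_linear)
  show ?thesis
    unfolding x0_def[symmetric] H0_def[symmetric] J0_def[symmetric] Hi_def[symmetric]
    unfolding has_derivative_at_alt
  proof (intro conjI allI impI bl)
    fix e :: real assume e: "0 < e"
    define e1 where "e1 = min 1 (e * m0 / 3)"
    have e1: "0 < e1" "e1 \<le> 1" "e1 \<le> e * m0 / 3" using e m0 by (auto simp: e1_def)
    obtain d1 where d1: "d1 > 0" "\<And>s. norm (s - \<theta>) < d1 \<Longrightarrow> norm (gx x0 s - gx x0 \<theta> - J0 *v (s - \<theta>)) \<le> e1 * norm (s - \<theta>)"
      using J_deriv[of x0 \<theta>] e1(1) unfolding has_derivative_at_alt J0_def by blast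
    define e2 where "e2 = min (m0 / 4) (e * m0 / (3 * C))"
    have e2: "0 < e2" "e2 \<le> m0 / 4" "e2 \<le> e * m0 / (3 * C)" using e m0 C by (auto simp: e2_def)
    define K where "K = real CARD('n) * real CARD('n)"
    have K: "0 < K" by (simp add: K_def)
    have "continuous (at \<theta>) (\<lambda>t. Hx x0 t)"
      using Hx_cont[of x0] by (simp add: continuous_on_eq_continuous_at)
    then obtain d2 where d2: "d2 > 0" "\<And>s. dist s \<theta> < d2 \<Longrightarrow> dist (Hx x0 s) (Hx x0 \<theta>) < e2 / K"
      unfolding continuous_at_eps_delta using e2(1) K by (metis divide_pos_pos)
    have as: "opnorm (Hx x0 s - H0) < e2" if "norm (s - \<theta>) < d2" for s
    proof -
      have "opnorm (Hx x0 s - H0) \<le> K * norm (Hx x0 s - H0)" unfolding K_def by (rule opnorm_le_norm)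
      also have "\<dots> < K * (e2 / K)"
      proof -
        have "norm (Hx x0 s - H0) < e2 / K" using d2(2)[of s] that unfolding H0_def by (simp add: dist_norm)
        then show ?thesis using K by (rule mult_strict_left_mono)
      qed
      also have "\<dots> = e2" using K by simp
      finally show ?thesis .
    qed
    define d3 where "d3 = m0 * r / (2 * (oJ + 1))"
    have d3: "0 < d3" unfolding d3_def using m0 r oJ by simp
    define d4 where "d4 = e * m0 / (3 * (LH * C^2 + 1))"
    have d4: "0 < d4" unfolding d4_def using m0 e L by (simp add: add_nonneg_pos)
    define d where "d = min (min d1 d2) (min d3 d4)"
    have d: "0 < d" using d1 d2 d3 d4 by (simp add: d_def)
    show "\<exists>d>0. \<forall>s. norm (s - \<theta>) < d \<longrightarrow>
      norm (xhat h s - xhat h \<theta> - - (Hi *v (J0 *v (s - \<theta>)))) \<le> e * norm (s - \<theta>)"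
    proof (intro exI[of _ d] conjI allI impI d)
      fix s :: "real^'d" assume s: "norm (s - \<theta>) < d"
      let ?n = "norm (s - \<theta>)"
      have s1: "?n < d1" "?n < d2" "?n < d3" "?n < d4" using s by (auto simp: d_def)
      define E where "E = norm (gx x0 s - J0 *v (s - \<theta>))"
      have E: "E \<le> e1 * ?n" using d1(2)[OF s1(1)] x0z by (simp add: E_def)
      have a: "opnorm (Hx x0 s - H0) < e2" by (rule as[OF s1(2)])
      have gs: "norm (gx x0 s) \<le> (oJ + 1) * ?n"
      proof -
        have "norm (gx x0 s) \<le> norm (J0 *v (s - \<theta>)) + E"
          unfolding E_def by (metis norm_triangle_sub add.commute)
        also have "\<dots> \<le> oJ * ?n + e1 * ?n" using mv_bound[of J0 "s - \<theta>"] E by (simp add: oJ_def)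
        also have "\<dots> \<le> (oJ + 1) * ?n" using mult_right_mono[OF e1(2), of ?n] by (simp add: algebra_simps)
        finally show ?thesis .
      qed
      have gs2: "norm (gx x0 s) < m0 / 2 * r"
      proof -
        have "(oJ + 1) * ?n < (oJ + 1) * d3" using s1(3) oJ by simp
        also have "\<dots> = m0 / 2 * r" unfolding d3_def using oJ by (simp add: field_simps)
        finally show ?thesis using gs by linarith
      qed
      define dd where "dd = xhat h s - x0"
      have ndd: "norm dd \<le> C * ?n"
      proof -
        have "norm dd \<le> 2 * norm (gx x0 s) / m0"
          unfolding dd_def m0_def
          by (rule local_bound[OF x0z]) (use a e2 gs2 in \<open>auto simp: H0_def m0_def r_def\<close>)
        also have "\<dots> \<le> 2 * ((oJ + 1) * ?n) / m0" using gs m0 by (simp add: divide_right_mono)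
        also have "\<dots> = C * ?n" by (simp add: C_def)
        finally show ?thesis .
      qed
      have k2: "norm (dd + Hi *v (J0 *v (s - \<theta>))) \<le> (LH * (norm dd)\<^sup>2 + opnorm (Hx x0 s - H0) * norm dd + E) / m0"
        using K2[where \<theta>=\<theta> and s=s] unfolding dd_def x0_def H0_def Hi_def J0_def E_def m0_def .
      have t1: "LH * (norm dd)\<^sup>2 \<le> e * m0 / 3 * ?n"
      proof -
        have "LH * (norm dd)\<^sup>2 \<le> LH * (C * ?n)^2"
          using ndd L by (simp add: mult_left_mono power_mono)
        also have "\<dots> = (LH * C^2 * ?n) * ?n" by (simp add: power2_eq_square)
        also have "\<dots> \<le> (e * m0 / 3) * ?n"
        proof (rule mult_right_mono)
          have "LH * C^2 * ?n \<le> (LH * C^2 + 1) * d4" using s1(4) L by (intro mult_mono) auto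
          also have "\<dots> = e * m0 / 3"
          proof -
            have "0 < LH * C^2 + 1" using L by (simp add: add_nonneg_pos)
            then show ?thesis unfolding d4_def by (simp add: field_simps)
          qed
          finally show "LH * C^2 * ?n \<le> e * m0 / 3" .
        qed simp
        finally show ?thesis .
      qed
      have t2: "opnorm (Hx x0 s - H0) * norm dd \<le> e * m0 / 3 * ?n"
      proof -
        have "opnorm (Hx x0 s - H0) * norm dd \<le> e2 * (C * ?n)"
          using a ndd e2(1) by (intro mult_mono) (auto simp: opnorm_nonneg)
        also have "\<dots> \<le> (e * m0 / (3 * C)) * (C * ?n)" using e2 C by (intro mult_right_mono) auto
        also have "\<dots> = e * m0 / 3 * ?n" using C by simp
        finally show ?thesis .
      qed
      have t3: "E \<le> e * m0 / 3 * ?n" using E e1 by (meson mult_right_mono norm_ge_zero order_trans)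
      have "norm (dd + Hi *v (J0 *v (s - \<theta>))) \<le> (e * m0 * ?n) / m0"
      proof -
        have "LH * (norm dd)\<^sup>2 + opnorm (Hx x0 s - H0) * norm dd + E \<le> 3 * (e * m0 / 3 * ?n)"
          using t1 t2 t3 by linarith
        also have "\<dots> = e * m0 * ?n" by simp
        finally have "LH * (norm dd)\<^sup>2 + opnorm (Hx x0 s - H0) * norm dd + E \<le> e * m0 * ?n" .
        then have "(LH * (norm dd)\<^sup>2 + opnorm (Hx x0 s - H0) * norm dd + E) / m0 \<le> e * m0 * ?n / m0"
          using m0 by (intro divide_right_mono) auto
        then show ?thesis using k2 by linarith
      qed
      also have "\<dots> = e * ?n" using m0 by simp
      finally show "norm (xhat h s - xhat h \<theta> - - (Hi *v (J0 *v (s - \<theta>)))) \<le> e * ?n"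
        by (simp add: dd_def x0_def)
    qed
  qed
qed

end

lemma transpose_diff_mv: "transpose ((A::real^'m^'k) - B) *v v = transpose A *v v - transpose B *v v"
  by (simp add: transpose_def matrix_vector_mult_def vec_eq_iff sum_subtractf algebra_simps)

lemma vec_eq_by_inner: "(\<And>w. (a::real^'n) \<bullet> w = b \<bullet> w) \<Longrightarrow> a = b"
proof -
  assume "\<And>w. a \<bullet> w = b \<bullet> w"
  then have "(a - b) \<bullet> (a - b) = 0" by (simp add: inner_diff_left)
  then show "a = b" by simp
qed

context ll2 begin

lemma grad_formula:
  assumes f_deriv: "((\<lambda>s. g (xhat h s)) has_derivative (\<lambda>w. gfv \<bullet> w)) (at \<theta>)"
    and g_deriv: "\<And>x. (g has_derivative (\<lambda>v. gg x \<bullet> v)) (at x)"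
  shows "gfv = - (transpose (Jx (xhat h \<theta>) \<theta>) *v (matrix_inv (Hx (xhat h \<theta>) \<theta>) *v gg (xhat h \<theta>)))"
proof -
  let ?x0 = "xhat h \<theta>"
  let ?Hi = "matrix_inv (Hx ?x0 \<theta>)" and ?J0 = "Jx ?x0 \<theta>"
  have "((\<lambda>s. g (xhat h s)) has_derivative (\<lambda>w. gg ?x0 \<bullet> (- (?Hi *v (?J0 *v w))))) (at \<theta>)"
    using has_derivative_compose[OF xhat_deriv g_deriv] .
  then have eq: "(\<lambda>w. gfv \<bullet> w) = (\<lambda>w. gg ?x0 \<bullet> (- (?Hi *v (?J0 *v w))))"
    using has_derivative_unique f_deriv by blast
  show ?thesis
  proof (rule vec_eq_by_inner)
    fix w
    have "gfv \<bullet> w = gg ?x0 \<bullet> (- (?Hi *v (?J0 *v w)))" using eq by metis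
    also have "\<dots> = - ((?Hi *v gg ?x0) \<bullet> (?J0 *v w))" by (simp add: Hinv_sym)
    also have "\<dots> = - (transpose ?J0 *v (?Hi *v gg ?x0)) \<bullet> w" by (simp add: transpose_dot del: transpose_matrix_vector)
    finally show "gfv \<bullet> w = - (transpose ?J0 *v (?Hi *v gg ?x0)) \<bullet> w" .
  qed
qed

lemma err_bound:
  assumes J_lip: "\<And>x y t. opnorm (Jx x t - Jx y t) \<le> LJ * norm (x - y)"
    and Hinv_lip: "\<And>x y t. opnorm (matrix_inv (Hx x t) - matrix_inv (Hx y t)) \<le> LHinv * norm (x - y)"
    and gg_lip: "\<And>x y. norm (gg x - gg y) \<le> Lg * norm (x - y)"
    and LJ: "0 \<le> LJ" and LHinv: "0 \<le> LHinv" and Lg: "0 \<le> Lg"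
    and xt: "norm (xt - xhat h \<theta>) \<le> eps"
    and q: "norm (Hx xt \<theta> *v q - gg xt) \<le> del"
  shows "norm (zdir Jx xt \<theta> q - - (transpose (Jx (xhat h \<theta>) \<theta>) *v (matrix_inv (Hx (xhat h \<theta>) \<theta>) *v gg (xhat h \<theta>))))
     \<le> omega Lg LHinv LJ gg Jx mu xt \<theta> eps del"
proof -
  define x0 where "x0 = xhat h \<theta>"
  define m where "m = mu \<theta>"
  define J0 where "J0 = Jx x0 \<theta>"
  define Jt where "Jt = Jx xt \<theta>"
  define Hi0 where "Hi0 = matrix_inv (Hx x0 \<theta>)"
  define Hit where "Hit = matrix_inv (Hx xt \<theta>)"
  define ps where "ps = Hi0 *v gg x0"
  define pt where "pt = Hit *v gg xt"
  define oJ where "oJ = opnorm Jt"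
  define G where "G = norm (gg xt)"
  have m: "0 < m" unfolding m_def by (rule mu_pos)
  have oJ: "0 \<le> oJ" unfolding oJ_def by (rule opnorm_nonneg)
  have xt': "norm (x0 - xt) \<le> eps" using xt by (simp add: x0_def norm_minus_commute)
  have eps: "0 \<le> eps" using xt norm_ge_zero[of "xt - xhat h \<theta>"] by linarith
  have split: "zdir Jx xt \<theta> q - - (transpose J0 *v ps)
     = - (transpose Jt *v (q - pt)) + transpose (J0 - Jt) *v ps + transpose Jt *v (ps - pt)"
    by (simp add: zdir_def Jt_def transpose_diff_mv matrix_vector_mult_diff_distrib del: transpose_matrix_vector)
  have tri: "norm (- a + b + c) \<le> norm a + norm b + norm c" for a b c :: "real^'d"
  proof -
    have "norm (- a + b + c) \<le> norm (- a + b) + norm c" by (rule norm_triangle_ineq)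
    also have "norm (- a + b) \<le> norm (- a) + norm b" by (rule norm_triangle_ineq)
    finally show ?thesis by simp
  qed
  have n1: "norm (transpose Jt *v (q - pt)) \<le> oJ * (del / m)"
  proof -
    have "q - pt = Hit *v (Hx xt \<theta> *v q - gg xt)"
      by (simp add: pt_def Hit_def matrix_vector_mult_diff_distrib Hinv_r)
    then have "norm (q - pt) \<le> norm (Hx xt \<theta> *v q - gg xt) / m"
      using Hinv_bound[of xt \<theta> "Hx xt \<theta> *v q - gg xt"] unfolding Hit_def m_def by simp
    also have "\<dots> \<le> del / m" using q m by (intro divide_right_mono) auto
    finally have "norm (q - pt) \<le> del / m" .
    moreover have "norm (transpose Jt *v (q - pt)) \<le> oJ * norm (q - pt)"
      unfolding oJ_def by (rule mvt_bound)
    ultimately show ?thesis using oJ by (meson mult_left_mono order_trans)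
  qed
  have n2: "norm (transpose (J0 - Jt) *v ps) \<le> LJ * eps * ((G + Lg * eps) / m)"
  proof -
    have "opnorm (J0 - Jt) \<le> LJ * norm (x0 - xt)"
      unfolding J0_def Jt_def by (rule J_lip)
    also have "\<dots> \<le> LJ * eps" using xt' LJ by (rule mult_left_mono)
    finally have o: "opnorm (J0 - Jt) \<le> LJ * eps" .
    have "norm (gg x0) \<le> norm (gg xt) + norm (gg x0 - gg xt)"
      using norm_triangle_ineq[of "gg xt" "gg x0 - gg xt"] by simp
    also have "norm (gg x0 - gg xt) \<le> Lg * norm (x0 - xt)" by (rule gg_lip)
    also have "\<dots> \<le> Lg * eps" using xt' Lg by (rule mult_left_mono)
    finally have g0: "norm (gg x0) \<le> G + Lg * eps" unfolding G_def by simp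
    have "norm ps \<le> norm (gg x0) / m"
      using Hinv_bound[of x0 \<theta> "gg x0"] unfolding ps_def Hi0_def m_def by simp
    also have "\<dots> \<le> (G + Lg * eps) / m" using g0 m by (intro divide_right_mono) auto
    finally have p: "norm ps \<le> (G + Lg * eps) / m" .
    have "norm (transpose (J0 - Jt) *v ps) \<le> opnorm (J0 - Jt) * norm ps" by (rule mvt_bound)
    also have "\<dots> \<le> LJ * eps * ((G + Lg * eps) / m)"
      using o p LJ eps by (intro mult_mono) (auto simp: opnorm_nonneg)
    finally show ?thesis .
  qed
  have n3: "norm (transpose Jt *v (ps - pt)) \<le> oJ * (Lg * eps / m + LHinv * eps * G)"
  proof -
    have "ps - pt = Hi0 *v (gg x0 - gg xt) + (Hi0 - Hit) *v gg xt"
      by (simp add: ps_def pt_def matrix_vector_mult_diff_distrib matrix_vector_mult_diff_rdistrib)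
    moreover have "norm (Hi0 *v (gg x0 - gg xt)) \<le> Lg * eps / m"
    proof -
      have "norm (Hi0 *v (gg x0 - gg xt)) \<le> norm (gg x0 - gg xt) / m"
        using Hinv_bound[of x0 \<theta> "gg x0 - gg xt"] unfolding Hi0_def m_def by simp
      also have "\<dots> \<le> Lg * eps / m"
      proof (rule divide_right_mono)
        have "norm (gg x0 - gg xt) \<le> Lg * norm (x0 - xt)" by (rule gg_lip)
        also have "\<dots> \<le> Lg * eps" using xt' Lg by (rule mult_left_mono)
        finally show "norm (gg x0 - gg xt) \<le> Lg * eps" .
      qed (use m in auto)
      finally show ?thesis .
    qed
    moreover have "norm ((Hi0 - Hit) *v gg xt) \<le> LHinv * eps * G"
    proof -
      have "norm ((Hi0 - Hit) *v gg xt) \<le> opnorm (Hi0 - Hit) * G" unfolding G_def by (rule mv_bound)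
      also have "\<dots> \<le> LHinv * eps * G"
      proof (rule mult_right_mono)
        have "opnorm (Hi0 - Hit) \<le> LHinv * norm (x0 - xt)" unfolding Hi0_def Hit_def by (rule Hinv_lip)
        also have "\<dots> \<le> LHinv * eps" using xt' LHinv by (rule mult_left_mono)
        finally show "opnorm (Hi0 - Hit) \<le> LHinv * eps" .
      qed (simp add: G_def)
      finally show ?thesis .
    qed
    ultimately have "norm (ps - pt) \<le> Lg * eps / m + LHinv * eps * G"
      using norm_triangle_ineq[of "Hi0 *v (gg x0 - gg xt)" "(Hi0 - Hit) *v gg xt"] by simp
    moreover have "norm (transpose Jt *v (ps - pt)) \<le> oJ * norm (ps - pt)"
      unfolding oJ_def by (rule mvt_bound)
    ultimately show ?thesis using oJ by (meson mult_left_mono order_trans)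
  qed
  have "norm (zdir Jx xt \<theta> q - - (transpose J0 *v ps))
     \<le> oJ * (del / m) + (LJ * eps) * ((G + Lg * eps) / m) + oJ * (Lg * eps / m + LHinv * eps * G)"
    unfolding split using tri[of "transpose Jt *v (q - pt)" "transpose (J0 - Jt) *v ps" "transpose Jt *v (ps - pt)"] n1 n2 n3
    by linarith
  also have "\<dots> = omega Lg LHinv LJ gg Jx mu xt \<theta> eps del"
    unfolding omega_def cfun_def m_def[symmetric] Jt_def[symmetric] oJ_def[symmetric] G_def[symmetric]
    using m by (simp add: field_simps power2_eq_square)
  finally show ?thesis unfolding J0_def ps_def Hi0_def x0_def .
qed

end

theorem proposition3p17:
  fixes h :: "real^'n \<Rightarrow> real^'d \<Rightarrow> real"
    and gx :: "real^'n \<Rightarrow> real^'d \<Rightarrow> real^'n"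
    and Hx :: "real^'n \<Rightarrow> real^'d \<Rightarrow> real^'n^'n"
    and Jx :: "real^'n \<Rightarrow> real^'d \<Rightarrow> real^'d^'n"
    and g :: "real^'n \<Rightarrow> real" and gg :: "real^'n \<Rightarrow> real^'n"
    and gf :: "real^'d \<Rightarrow> real^'d"
    and mu L :: "real^'d \<Rightarrow> real"
    and LH LJ LHinv Lf Lg :: real
    and \<theta> :: "real^'d" and \<epsilon> \<delta> \<eta> \<nu> :: real
    and xt q :: "nat \<Rightarrow> real^'n"
  assumes h_grad: "\<And>x t. ((\<lambda>y. h y t) has_derivative (\<lambda>v. gx x t \<bullet> v)) (at x)"
    and h_hess: "\<And>x t. ((\<lambda>y. gx y t) has_derivative (\<lambda>v. Hx x t *v v)) (at x)"
    and mu_pos: "\<And>t. 0 < mu t" and mu_le_L: "\<And>t. mu t \<le> L t"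
    and hess_lower: "\<And>x t v. mu t * (norm v)\<^sup>2 \<le> v \<bullet> (Hx x t *v v)"
    and hess_upper: "\<And>x t v. v \<bullet> (Hx x t *v v) \<le> L t * (norm v)\<^sup>2"
    and gx_cont: "\<And>x. continuous_on UNIV (\<lambda>t. gx x t)"
    and Hx_cont: "\<And>x. continuous_on UNIV (\<lambda>t. Hx x t)"
    and J_deriv: "\<And>x t. ((\<lambda>s. gx x s) has_derivative (\<lambda>w. Jx x t *v w)) (at t)"
    and H_lip: "\<And>x y t. opnorm (Hx x t - Hx y t) \<le> LH * norm (x - y)"
    and J_lip: "\<And>x y t. opnorm (Jx x t - Jx y t) \<le> LJ * norm (x - y)"
    and Hinv_lip: "\<And>x y t. opnorm (matrix_inv (Hx x t) - matrix_inv (Hx y t)) \<le> LHinv * norm (x - y)"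
    and f_deriv: "\<And>t. ((\<lambda>s. g (xhat h s)) has_derivative (\<lambda>w. gf t \<bullet> w)) (at t)"
    and gf_cont: "continuous_on UNIV gf"
    and gf_lip: "\<And>s t. norm (gf s - gf t) \<le> Lf * norm (s - t)"
    and g_deriv: "\<And>x. (g has_derivative (\<lambda>v. gg x \<bullet> v)) (at x)"
    and gg_cont: "continuous_on UNIV gg"
    and gg_lip: "\<And>x y. norm (gg x - gg y) \<le> Lg * norm (x - y)"
    and Lf_pos: "Lf > 0" and Lg_pos: "Lg > 0"
    and g_bdd: "bdd_below (range g)"
    and gf_nz: "norm (gf \<theta>) > 0"
    and eps_pos: "\<epsilon> > 0" and del_pos: "\<delta> > 0"
    and eta: "0 < \<eta>" "\<eta> < 1" and nu: "0 < \<nu>" "\<nu> < 1"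
    and xt_spec: "\<And>k. norm (gx (xt k) \<theta>) \<le> (\<nu> ^ k * \<epsilon>) * mu \<theta>"
    and q_spec: "\<And>k. norm (Hx (xt k) \<theta> *v q k - gg (xt k)) \<le> \<nu> ^ k * \<delta>"
  shows "\<exists>k. omega Lg LHinv LJ gg Jx mu (xt k) \<theta> (\<nu> ^ k * \<epsilon>) (\<nu> ^ k * \<delta>)
               \<le> (1 - \<eta>) * norm (zdir Jx (xt k) \<theta> (q k))
          \<and> (\<forall>j<k. \<not> omega Lg LHinv LJ gg Jx mu (xt j) \<theta> (\<nu> ^ j * \<epsilon>) (\<nu> ^ j * \<delta>)
               \<le> (1 - \<eta>) * norm (zdir Jx (xt j) \<theta> (q j)))
          \<and> zdir Jx (xt k) \<theta> (q k) \<bullet> gf \<theta> > 0"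
proof -
  interpret ll2 h gx Hx mu LH Jx
    by unfold_locales (rule h_grad h_hess mu_pos hess_lower H_lip Hx_cont J_deriv)+
  define x0 where "x0 = xhat h \<theta>"
  define J0 where "J0 = Jx x0 \<theta>"
  define m where "m = mu \<theta>"
  have m: "0 < m" unfolding m_def by (rule mu_pos)
  have gfe: "gf \<theta> = - (transpose (Jx (xhat h \<theta>) \<theta>) *v (matrix_inv (Hx (xhat h \<theta>) \<theta>) *v gg (xhat h \<theta>)))"
    by (rule grad_formula[OF f_deriv g_deriv])
  obtain v :: "real^'n" where v: "v \<noteq> 0" using zero_neq_one by blast
  have LJ: "0 \<le> LJ"
  proof -
    have "0 \<le> LJ * norm (v - 0)"
      using J_lip[where x=v and y=0 and t=\<theta>] opnorm_nonneg[of "Jx v \<theta> - Jx 0 \<theta>"] by linarith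
    then show ?thesis using v by (simp add: zero_le_mult_iff)
  qed
  have LHinv: "0 \<le> LHinv"
  proof -
    have "0 \<le> LHinv * norm (v - 0)"
      using Hinv_lip[where x=v and y=0 and t=\<theta>] opnorm_nonneg[of "matrix_inv (Hx v \<theta>) - matrix_inv (Hx 0 \<theta>)"] by linarith
    then show ?thesis using v by (simp add: zero_le_mult_iff)
  qed
  define ek where "ek k = \<nu> ^ k * \<epsilon>" for k
  define dk where "dk k = \<nu> ^ k * \<delta>" for k
  define z where "z k = zdir Jx (xt k) \<theta> (q k)" for k
  define w where "w k = omega Lg LHinv LJ gg Jx mu (xt k) \<theta> (ek k) (dk k)" for k
  have nuk: "0 < \<nu> ^ k" "\<nu> ^ k \<le> 1" for k :: nat using nu by (auto simp: power_le_one)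
  have ek: "0 \<le> ek k" "ek k \<le> \<epsilon>" for k
    using nuk[of k] eps_pos by (auto simp: ek_def mult_left_le_one_le)
  have xk: "norm (xt k - x0) \<le> ek k" for k
  proof -
    let ?d = "xt k - x0"
    have "m * (norm ?d)\<^sup>2 \<le> (gx (xt k) \<theta> - gx x0 \<theta>) \<bullet> ?d" unfolding m_def by (rule strong_mono)
    also have "\<dots> = gx (xt k) \<theta> \<bullet> ?d" by (simp add: x0_def xhat_zero)
    also have "\<dots> \<le> norm (gx (xt k) \<theta>) * norm ?d" by (rule norm_cauchy_schwarz)
    also have "\<dots> \<le> (ek k * m) * norm ?d" using xt_spec[of k] by (simp add: ek_def m_def mult_right_mono)
    finally have "(m * norm ?d) * norm ?d \<le> (ek k * m) * norm ?d" by (simp add: power2_eq_square algebra_simps)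
    then have "m * norm ?d \<le> ek k * m" using ek(1)[of k] m by (cases "norm ?d = 0") auto
    then show ?thesis using m by (simp add: mult.commute)
  qed
  have err: "norm (z k - gf \<theta>) \<le> w k" for k
    unfolding z_def w_def gfe
    by (rule err_bound[OF J_lip Hinv_lip gg_lip LJ LHinv less_imp_le[OF Lg_pos]])
       (use xk[of k] q_spec[of k] in \<open>auto simp: x0_def dk_def\<close>)
  define P where "P k \<longleftrightarrow> w k \<le> (1 - \<eta>) * norm (z k)" for k
  have desc: "z k \<bullet> gf \<theta> > 0" if Pk: "P k" for k
  proof -
    have e: "norm (z k - gf \<theta>) \<le> (1 - \<eta>) * norm (z k)" using err[of k] Pk by (simp add: P_def)
    show ?thesis
    proof (cases "z k = 0")
      case True
      then show ?thesis using e gf_nz by simp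
    next
      case False
      then have "(1 - \<eta>) * norm (z k) < norm (z k)" using eta by simp
      with e have lt: "norm (z k - gf \<theta>) < norm (z k)" by linarith
      have "(norm (z k - gf \<theta>))\<^sup>2 < (norm (z k))\<^sup>2"
        using lt by (simp add: power_strict_mono)
      then have "(norm (z k))\<^sup>2 - 2 * (z k \<bullet> gf \<theta>) + (norm (gf \<theta>))\<^sup>2 < (norm (z k))\<^sup>2"
        by (simp add: power2_norm_eq_inner inner_diff_left inner_diff_right inner_commute)
      then show ?thesis using zero_le_power2[of "norm (gf \<theta>)"] by linarith
    qed
  qed
  define A where "A = opnorm J0 + LJ * \<epsilon>"
  define B where "B = norm (gg x0) + Lg * \<epsilon>"
  define cb where "cb = Lg * A / m + LHinv * B * A + LJ * B / m"
  define W where "W = cb * \<epsilon> + A / m * \<delta> + LJ * Lg / m * \<epsilon> * \<epsilon>"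
  have A0: "0 \<le> A" unfolding A_def using LJ eps_pos opnorm_nonneg[of J0] by simp
  have B0: "0 \<le> B" unfolding B_def using Lg_pos eps_pos by simp
  have cb0: "0 \<le> cb" unfolding cb_def using A0 B0 m Lg_pos LJ LHinv by simp
  have W0: "0 \<le> W" unfolding W_def using cb0 A0 m Lg_pos LJ eps_pos del_pos by simp
  have wb: "w k \<le> \<nu> ^ k * W" for k
  proof -
    define Jt where "Jt = Jx (xt k) \<theta>"
    have oJ: "opnorm Jt \<le> A"
    proof -
      have "opnorm Jt \<le> opnorm J0 + opnorm (Jt - J0)" using opnorm_add[of J0 "Jt - J0"] by simp
      also have "opnorm (Jt - J0) \<le> LJ * norm (xt k - x0)" unfolding Jt_def J0_def by (rule J_lip)
      also have "\<dots> \<le> LJ * \<epsilon>" using xk[of k] ek[of k] LJ by (meson mult_left_mono order_trans)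
      finally show ?thesis unfolding A_def by simp
    qed
    have gB: "norm (gg (xt k)) \<le> B"
    proof -
      have "norm (gg (xt k)) \<le> norm (gg x0) + norm (gg (xt k) - gg x0)"
        using norm_triangle_ineq[of "gg x0" "gg (xt k) - gg x0"] by simp
      also have "norm (gg (xt k) - gg x0) \<le> Lg * norm (xt k - x0)" by (rule gg_lip)
      also have "\<dots> \<le> Lg * \<epsilon>" using xk[of k] ek[of k] Lg_pos by (meson less_imp_le mult_left_mono order_trans)
      finally show ?thesis unfolding B_def by simp
    qed
    have c: "cfun Lg LHinv LJ gg Jx mu (xt k) \<theta> \<le> cb"
    proof -
      have 1: "Lg * opnorm Jt / m \<le> Lg * A / m"
        using oJ Lg_pos m by (intro divide_right_mono mult_left_mono) auto
      have 2: "LHinv * norm (gg (xt k)) * opnorm Jt \<le> LHinv * B * A"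
        using oJ gB LHinv by (intro mult_mono) (auto simp: opnorm_nonneg B0)
      have 3: "LJ * norm (gg (xt k)) / m \<le> LJ * B / m"
        using gB LJ m by (intro divide_right_mono mult_left_mono) auto
      show ?thesis using 1 2 3 unfolding cfun_def cb_def Jt_def m_def by linarith
    qed
    have w1: "cfun Lg LHinv LJ gg Jx mu (xt k) \<theta> * ek k \<le> cb * ek k"
      using c ek(1)[of k] by (rule mult_right_mono)
    have w2: "opnorm Jt / m * dk k \<le> A / m * dk k"
      using oJ m del_pos nuk[of k] by (intro mult_right_mono divide_right_mono) (auto simp: dk_def)
    have w3: "LJ * Lg / m * (ek k)^2 \<le> LJ * Lg / m * (\<epsilon> * ek k)"
    proof (rule mult_left_mono)
      show "(ek k)^2 \<le> \<epsilon> * ek k" using ek[of k] by (simp add: power2_eq_square mult_right_mono)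
    qed (use LJ Lg_pos m in auto)
    have "w k \<le> cb * ek k + A / m * dk k + LJ * Lg / m * (\<epsilon> * ek k)"
      using w1 w2 w3 unfolding w_def omega_def Jt_def m_def by linarith
    also have "\<dots> = \<nu> ^ k * W" by (simp add: ek_def dk_def W_def algebra_simps)
    finally show ?thesis .
  qed
  define T where "T = (1 - \<eta>) * norm (gf \<theta>) / 2"
  have T: "0 < T" unfolding T_def using eta gf_nz by simp
  obtain k where k: "\<nu> ^ k < T / (W + 1)"
    using real_arch_pow_inv[of "T / (W + 1)" \<nu>] T W0 nu by auto
  have "\<nu> ^ k * W \<le> \<nu> ^ k * (W + 1)" using nuk[of k] by simp
  also have "\<dots> < T / (W + 1) * (W + 1)" using k W0 by (intro mult_strict_right_mono) auto
  also have "\<dots> = T" using W0 by simp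
  finally have wT: "w k \<le> T" using wb[of k] by linarith
  have "P k"
  proof -
    have w0: "0 \<le> w k" using err[of k] norm_ge_zero[of "z k - gf \<theta>"] by linarith
    have "norm (gf \<theta>) - w k \<le> norm (z k)"
      using err[of k] norm_triangle_ineq2[of "gf \<theta>" "z k"] by (simp add: norm_minus_commute)
    then have "(1 - \<eta>) * (norm (gf \<theta>) - w k) \<le> (1 - \<eta>) * norm (z k)"
      using eta by (intro mult_left_mono) auto
    moreover have "(1 - \<eta>) * (norm (gf \<theta>) - w k) = 2 * T - (1 - \<eta>) * w k"
      unfolding T_def by (simp add: field_simps)
    moreover have "(1 - \<eta>) * w k \<le> w k" using eta w0 by (simp add: mult_left_le_one_le)
    ultimately show ?thesis unfolding P_def using wT w0 by linarith
  qed
  then have ex: "\<exists>k. P k" by blast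
  define k0 where "k0 = (LEAST k. P k)"
  have Pk0: "P k0" unfolding k0_def using ex by (rule LeastI_ex)
  have notP: "\<forall>j<k0. \<not> P j" unfolding k0_def using not_less_Least by blast
  show ?thesis
    using Pk0 notP desc[OF Pk0]
    unfolding P_def w_def z_def ek_def dk_def by blast
qed

end
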